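(* Let $\phi\colon(\Gamma_1,X_1)\to(\Gamma_2,X_2)$ be a morphism in $\mathsf{SpatG}$. Define $\operatorname{Germ}(\phi)\colon\operatorname{Germ}(\Gamma_1,X_1)\to\operatorname{Germ}(\Gamma_2,X_2)$ by $\operatorname{Germ}(\phi)([\gamma,x])=[\gamma',\phi(x)]$, where $\gamma'\in\Gamma_2$ is any element with $\phi\circ\gamma=\gamma'\circ\phi$. Then $\operatorname{Germ}(\phi)$ is a well-defined étale homomorphism, and the assignments $(\Gamma,X)\mapsto\operatorname{Germ}(\Gamma,X)$, $\phi\mapsto\operatorname{Germ}(\phi)$ form a covariant functor $\mathsf{SpatG}\to\mathsf{Gpoid}$.
   Context: A Boolean space is a Hausdorff space with a basis of compact open sets; $\operatorname{Homeo}_c(X)$ is the set of homeomorphisms of $X$ whose support (closure of moved points) is compact open. The category $\mathsf{SpatG}$ has objects $(\Gamma,X)$ with $X$ Boolean and $\Gamma$ a subgroup of $\operatorname{Homeo}(X)$ contained in $\operatorname{Homeo}_c(X)$; a morphism $(\Gamma_1,X_1)\to(\Gamma_2,X_2)$ is a local homeomorphism $\phi\colon X_1\to X_2$ such that for each $\gamma\in\Gamma_1$ there is $\gamma'\in\Gamma_2$ with $\phi\circ\gamma=\gamma'\circ\phi$. The category $\mathsf{Gpoid}$ has objects ample (étale, unit space Hausdorff with basis of compact opens), effective (interior of isotropy equals unit space), Hausdorff groupoids, and morphisms étale homomorphisms (groupoid homomorphisms that are local homeomorphisms). The groupoid of germs $\operatorname{Germ}(\Gamma,X)$ is $\Gamma\times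 X$ modulo $(\gamma,x)\sim(\tau,y)$ iff $x=y$ and $\gamma,\tau$ agree near $x$; classes $[\gamma,x]$ with $s[\gamma,x]=x$, $r[\gamma,x]=\gamma(x)$, $[\tau,\gamma(x)][\gamma,x]=[\tau\gamma,x]$, $[\gamma,x]^{-1}=[\gamma^{-1},\gamma(x)]$, unit space $X$, topology with basis $\{[\gamma,x]:x\in A\}$ for $\gamma\in\Gamma$, $A$ open. *)

theory Defs
  imports "HOL-Analysis.Analysis"
begin

definition boolean_space :: "'a topology \<Rightarrow> bool" where
  "boolean_space X \<longleftrightarrow> Hausdorff_space X \<and>
     (\<forall>U x. openin X U \<and> x \<in> U \<longrightarrow>
        (\<exists>V. openin X V \<and> compactin X V \<and> x \<in> V \<and> V \<subseteq> U))"

text \<open>Homeomorphisms of X, represented as functions on the whole type that are the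
  identity outside the carrier of X.\<close>
definition Homeo :: "'a topology \<Rightarrow> ('a \<Rightarrow> 'a) set" where
  "Homeo X = {g. homeomorphic_map X X g \<and> (\<forall>x. x \<notin> topspace X \<longrightarrow> g x = x)}"

definition supp :: "'a topology \<Rightarrow> ('a \<Rightarrow> 'a) \<Rightarrow> 'a set" where
  "supp X g = X closure_of {x \<in> topspace X. g x \<noteq> x}"

definition Homeo_c :: "'a topology \<Rightarrow> ('a \<Rightarrow> 'a) set" where
  "Homeo_c X = {g \<in> Homeo X. compactin X (supp X g) \<and> openin X (supp X g)}"

definition local_homeo :: "'a topology \<Rightarrow> 'b topology \<Rightarrow> ('a \<Rightarrow> 'b) \<Rightarrow> bool" where
  "local_homeo X Y f \<longleftrightarrow> continuous_map X Y f \<and>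
     (\<forall>x \<in> topspace X. \<exists>U. openin X U \<and> x \<in> U \<and> openin Y (f ` U) \<and>
        homeomorphic_map (subtopology X U) (subtopology Y (f ` U)) f)"

definition spatg_obj :: "('a \<Rightarrow> 'a) set \<Rightarrow> 'a topology \<Rightarrow> bool" where
  "spatg_obj \<Gamma> X \<longleftrightarrow> boolean_space X \<and> \<Gamma> \<subseteq> Homeo_c X \<and> id \<in> \<Gamma> \<and>
     (\<forall>g\<in>\<Gamma>. \<forall>h\<in>\<Gamma>. g \<circ> h \<in> \<Gamma>) \<and> (\<forall>g\<in>\<Gamma>. inv g \<in> \<Gamma>)"

definition intertwines :: "'a topology \<Rightarrow> ('a \<Rightarrow> 'b) \<Rightarrow> ('a \<Rightarrow> 'a) \<Rightarrow> ('b \<Rightarrow> 'b) \<Rightarrow> bool" where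
  "intertwines X1 \<phi> g g' \<longleftrightarrow> (\<forall>y \<in> topspace X1. \<phi> (g y) = g' (\<phi> y))"

definition spatg_mor ::
  "('a \<Rightarrow> 'a) set \<Rightarrow> 'a topology \<Rightarrow> ('b \<Rightarrow> 'b) set \<Rightarrow> 'b topology \<Rightarrow> ('a \<Rightarrow> 'b) \<Rightarrow> bool" where
  "spatg_mor \<Gamma>1 X1 \<Gamma>2 X2 \<phi> \<longleftrightarrow> local_homeo X1 X2 \<phi> \<and>
     (\<forall>g\<in>\<Gamma>1. \<exists>g'\<in>\<Gamma>2. intertwines X1 \<phi> g g')"

record 'g tgpoid =
  garr :: "'g set"
  gtop :: "'g topology"
  gsrc :: "'g \<Rightarrow> 'g"
  grng :: "'g \<Rightarrow> 'g"
  gmul :: "'g \<Rightarrow> 'g \<Rightarrow> 'g"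
  ginv :: "'g \<Rightarrow> 'g"

definition gunits :: "'g tgpoid \<Rightarrow> 'g set" where
  "gunits G = gsrc G ` garr G"

definition groupoid :: "'g tgpoid \<Rightarrow> bool" where
  "groupoid G \<longleftrightarrow>
    (\<forall>g\<in>garr G. gsrc G g \<in> garr G \<and> grng G g \<in> garr G \<and> ginv G g \<in> garr G) \<and>
    (\<forall>g\<in>garr G. gsrc G (gsrc G g) = gsrc G g \<and> grng G (gsrc G g) = gsrc G g \<and>
                 gsrc G (grng G g) = grng G g \<and> grng G (grng G g) = grng G g) \<and>
    (\<forall>g\<in>garr G. \<forall>h\<in>garr G. gsrc G g = grng G h \<longrightarrow>
        gmul G g h \<in> garr G \<and> gsrc G (gmul G g h) = gsrc G h \<and> grng G (gmul G g h) = grng G g) \<and>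
    (\<forall>f\<in>garr G. \<forall>g\<in>garr G. \<forall>h\<in>garr G. gsrc G f = grng G g \<and> gsrc G g = grng G h \<longrightarrow>
        gmul G (gmul G f g) h = gmul G f (gmul G g h)) \<and>
    (\<forall>g\<in>garr G. gmul G g (gsrc G g) = g \<and> gmul G (grng G g) g = g) \<and>
    (\<forall>g\<in>garr G. gsrc G (ginv G g) = grng G g \<and> grng G (ginv G g) = gsrc G g \<and>
        gmul G (ginv G g) g = gsrc G g \<and> gmul G g (ginv G g) = grng G g)"

definition composable :: "'g tgpoid \<Rightarrow> ('g \<times> 'g) set" where
  "composable G = {(g, h). g \<in> garr G \<and> h \<in> garr G \<and> gsrc G g = grng G h}"

definition top_groupoid :: "'g tgpoid \<Rightarrow> bool" where
  "top_groupoid G \<longleftrightarrow> groupoid G \<and> topspace (gtop G) = garr G \<and>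
     continuous_map (gtop G) (gtop G) (gsrc G) \<and>
     continuous_map (gtop G) (gtop G) (grng G) \<and>
     continuous_map (gtop G) (gtop G) (ginv G) \<and>
     continuous_map (subtopology (prod_topology (gtop G) (gtop G)) (composable G)) (gtop G)
        (\<lambda>(g, h). gmul G g h)"

definition etale_groupoid :: "'g tgpoid \<Rightarrow> bool" where
  "etale_groupoid G \<longleftrightarrow> top_groupoid G \<and>
     local_homeo (gtop G) (subtopology (gtop G) (gunits G)) (gsrc G)"

definition ample :: "'g tgpoid \<Rightarrow> bool" where
  "ample G \<longleftrightarrow> etale_groupoid G \<and> boolean_space (subtopology (gtop G) (gunits G))"

definition isotropy :: "'g tgpoid \<Rightarrow> 'g set" where
  "isotropy G = {g \<in> garr G. gsrc G g = grng G g}"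

definition effective :: "'g tgpoid \<Rightarrow> bool" where
  "effective G \<longleftrightarrow> (gtop G) interior_of (isotropy G) = gunits G"

definition gpoid_obj :: "'g tgpoid \<Rightarrow> bool" where
  "gpoid_obj G \<longleftrightarrow> ample G \<and> effective G \<and> Hausdorff_space (gtop G)"

definition groupoid_hom :: "'g tgpoid \<Rightarrow> 'h tgpoid \<Rightarrow> ('g \<Rightarrow> 'h) \<Rightarrow> bool" where
  "groupoid_hom G H f \<longleftrightarrow> (\<forall>g\<in>garr G. f g \<in> garr H) \<and>
     (\<forall>g\<in>garr G. \<forall>h\<in>garr G. gsrc G g = grng G h \<longrightarrow>
        gsrc H (f g) = grng H (f h) \<and> f (gmul G g h) = gmul H (f g) (f h))"

definition etale_hom :: "'g tgpoid \<Rightarrow> 'h tgpoid \<Rightarrow> ('g \<Rightarrow> 'h) \<Rightarrow> bool" where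
  "etale_hom G H f \<longleftrightarrow> groupoid_hom G H f \<and> local_homeo (gtop G) (gtop H) f"

definition germ :: "('a \<Rightarrow> 'a) set \<Rightarrow> 'a topology \<Rightarrow> ('a \<Rightarrow> 'a) \<Rightarrow> 'a \<Rightarrow> (('a \<Rightarrow> 'a) \<times> 'a) set" where
  "germ \<Gamma> X g x = {(t, x) | t. t \<in> \<Gamma> \<and>
      (\<exists>U. openin X U \<and> x \<in> U \<and> (\<forall>y\<in>U. t y = g y))}"

definition germ_fn :: "(('a \<Rightarrow> 'a) \<times> 'a) set \<Rightarrow> ('a \<Rightarrow> 'a)" where
  "germ_fn c = fst (SOME p. p \<in> c)"

definition germ_pt :: "(('a \<Rightarrow> 'a) \<times> 'a) set \<Rightarrow> 'a" where
  "germ_pt c = snd (SOME p. p \<in> c)"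

definition Germ :: "('a \<Rightarrow> 'a) set \<Rightarrow> 'a topology \<Rightarrow> (('a \<Rightarrow> 'a) \<times> 'a) set tgpoid" where
  "Germ \<Gamma> X =
    \<lparr> garr = {germ \<Gamma> X g x | g x. g \<in> \<Gamma> \<and> x \<in> topspace X},
      gtop = topology_generated_by
               {{germ \<Gamma> X g x | x. x \<in> A} | g A. g \<in> \<Gamma> \<and> openin X A},
      gsrc = (\<lambda>c. germ \<Gamma> X id (germ_pt c)),
      grng = (\<lambda>c. germ \<Gamma> X id (germ_fn c (germ_pt c))),
      gmul = (\<lambda>c d. germ \<Gamma> X (germ_fn c \<circ> germ_fn d) (germ_pt d)),
      ginv = (\<lambda>c. germ \<Gamma> X (inv (germ_fn c)) (germ_fn c (germ_pt c))) \<rparr>"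

definition Germ_map ::
  "('a \<Rightarrow> 'a) set \<Rightarrow> 'a topology \<Rightarrow> ('b \<Rightarrow> 'b) set \<Rightarrow> 'b topology \<Rightarrow> ('a \<Rightarrow> 'b)
   \<Rightarrow> (('a \<Rightarrow> 'a) \<times> 'a) set \<Rightarrow> (('b \<Rightarrow> 'b) \<times> 'b) set" where
  "Germ_map \<Gamma>1 X1 \<Gamma>2 X2 \<phi> c =
     germ \<Gamma>2 X2 (SOME g'. g' \<in> \<Gamma>2 \<and> intertwines X1 \<phi> (germ_fn c) g') (\<phi> (germ_pt c))"

end

theory Submission imports Defs begin

locale germ_ctx =
  fixes \<Gamma> :: "('a \<Rightarrow> 'a) set" and X :: "'a topology"
  assumes obj: "spatg_obj \<Gamma> X"
begin

definition agree where
  "agree g h x \<longleftrightarrow> (\<exists>U. openin X U \<and> x \<in> U \<and> (\<forall>y\<in>U. g y = h y))"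

definition B where "B g A = {germ \<Gamma> X g x | x. x \<in> A}"

lemma id_in: "id \<in> \<Gamma>" using obj by (simp add: spatg_obj_def)
lemma comp_in: "g \<in> \<Gamma> \<Longrightarrow> h \<in> \<Gamma> \<Longrightarrow> g \<circ> h \<in> \<Gamma>" using obj by (simp add: spatg_obj_def)
lemma inv_in: "g \<in> \<Gamma> \<Longrightarrow> inv g \<in> \<Gamma>" using obj by (simp add: spatg_obj_def)
lemma bool: "boolean_space X" using obj by (simp add: spatg_obj_def)
lemma Haus: "Hausdorff_space X" using bool by (simp add: boolean_space_def)

lemma Gam_c: "g \<in> \<Gamma> \<Longrightarrow> g \<in> Homeo_c X" using obj by (auto simp add: spatg_obj_def)
lemma Gam_hm: "g \<in> \<Gamma> \<Longrightarrow> homeomorphic_map X X g"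
  using Gam_c by (simp add: Homeo_c_def Homeo_def)
lemma Gam_out: "g \<in> \<Gamma> \<Longrightarrow> x \<notin> topspace X \<Longrightarrow> g x = x"
  using Gam_c by (simp add: Homeo_c_def Homeo_def)
lemma Gam_supp: "g \<in> \<Gamma> \<Longrightarrow> openin X (supp X g)"
  using Gam_c by (simp add: Homeo_c_def)
lemma Gam_cont: "g \<in> \<Gamma> \<Longrightarrow> continuous_map X X g"
  using Gam_hm homeomorphic_imp_continuous_map by blast
lemma Gam_top: "g \<in> \<Gamma> \<Longrightarrow> x \<in> topspace X \<Longrightarrow> g x \<in> topspace X"
  using Gam_cont[of g] unfolding continuous_map_def by blast
lemma Gam_bij_top: "g \<in> \<Gamma> \<Longrightarrow> bij_betw g (topspace X) (topspace X)"
  using Gam_hm homeomorphic_imp_surjective_map homeomorphic_imp_injective_map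
  by (metis bij_betw_def)
lemma Gam_inj: assumes "g \<in> \<Gamma>" shows "inj g"
proof
  fix a b assume e: "g a = g b"
  have bb: "bij_betw g (topspace X) (topspace X)" using Gam_bij_top assms .
  show "a = b"
  proof (cases "a \<in> topspace X")
    case True
    then show ?thesis
    proof (cases "b \<in> topspace X")
      case True
      with \<open>a \<in> topspace X\<close> e bb show ?thesis by (meson bij_betw_def inj_onD)
    next
      case False
      then show ?thesis using e Gam_out[OF assms False] Gam_top[OF assms True] by auto
    qed
  next
    case False
    have ga: "g a = a" using Gam_out[OF assms False] .
    show ?thesis
    proof (cases "b \<in> topspace X")
      case True
      then have "g b \<in> topspace X" using Gam_top[OF assms] by blast
      then show ?thesis using e ga False by simp
    next
      case False
      then show ?thesis using e ga Gam_out[OF assms False] by simp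
    qed
  qed
qed
lemma Gam_surj: assumes "g \<in> \<Gamma>" shows "surj g"
proof -
  have "y \<in> range g" for y
  proof (cases "y \<in> topspace X")
    case True
    then have "y \<in> g ` topspace X" using Gam_bij_top[OF assms] by (simp add: bij_betw_def)
    then show ?thesis by blast
  next
    case False then have "y = g y" using Gam_out[OF assms False] by simp
    then show ?thesis by blast
  qed
  then show ?thesis by auto
qed
lemma Gam_inv_l[simp]: "g \<in> \<Gamma> \<Longrightarrow> inv g (g x) = x"
  using Gam_inj[of g] by (simp add: inv_f_f)
lemma Gam_inv_r[simp]: "g \<in> \<Gamma> \<Longrightarrow> g (inv g x) = x"
  using Gam_surj[of g] by (simp add: surj_f_inv_f)
lemma Gam_open_image: "g \<in> \<Gamma> \<Longrightarrow> openin X A \<Longrightarrow> openin X (g ` A)"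
  using homeomorphic_map_openness[OF Gam_hm[of g] openin_subset[of X A]] by blast
lemma Gam_open_pre: "g \<in> \<Gamma> \<Longrightarrow> openin X A \<Longrightarrow> openin X {x \<in> topspace X. g x \<in> A}"
  using Gam_cont[of g] unfolding continuous_map_def by blast

lemma agree_refl: "x \<in> topspace X \<Longrightarrow> agree g g x"
  unfolding agree_def by blast
lemma agree_sym: "agree g h x \<Longrightarrow> agree h g x"
  unfolding agree_def by metis
lemma agree_trans: "agree f g x \<Longrightarrow> agree g h x \<Longrightarrow> agree f h x"
  unfolding agree_def
proof (elim exE conjE)
  fix U V assume "openin X U" "x \<in> U" "\<forall>y\<in>U. f y = g y" "openin X V" "x \<in> V" "\<forall>y\<in>V. g y = h y"
  then show "\<exists>U. openin X U \<and> x \<in> U \<and> (\<forall>y\<in>U. f y = h y)"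
    by (intro exI[of _ "U \<inter> V"]) auto
qed
lemma agree_at: "agree g h x \<Longrightarrow> g x = h x"
  unfolding agree_def by blast
lemma agree_on: "openin X U \<Longrightarrow> \<forall>y\<in>U. g y = h y \<Longrightarrow> y \<in> U \<Longrightarrow> agree g h y"
  unfolding agree_def by blast
lemma agree_top: "agree g h x \<Longrightarrow> x \<in> topspace X"
  unfolding agree_def using openin_subset by blast

lemma germ_mem: "p \<in> germ \<Gamma> X g x \<longleftrightarrow> snd p = x \<and> fst p \<in> \<Gamma> \<and> agree (fst p) g x"
  unfolding germ_def agree_def by (cases p) auto

lemma self_in: "g \<in> \<Gamma> \<Longrightarrow> x \<in> topspace X \<Longrightarrow> (g, x) \<in> germ \<Gamma> X g x"
  by (simp add: germ_mem agree_refl)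

lemma germ_eq_iff:
  assumes "g \<in> \<Gamma>" "x \<in> topspace X"
  shows "germ \<Gamma> X g x = germ \<Gamma> X h y \<longleftrightarrow> x = y \<and> agree g h x"
proof
  assume "germ \<Gamma> X g x = germ \<Gamma> X h y"
  then show "x = y \<and> agree g h x" using self_in[OF assms] by (simp add: germ_mem)
next
  assume a: "x = y \<and> agree g h x"
  show "germ \<Gamma> X g x = germ \<Gamma> X h y"
    using a by (auto simp: germ_mem) (meson agree_trans agree_sym)+
qed

lemma germ_eq:
  assumes "g \<in> \<Gamma>" "x \<in> topspace X" "agree g h x"
  shows "germ \<Gamma> X g x = germ \<Gamma> X h x"
  using germ_eq_iff assms by blast

lemma fn_pt:
  assumes "g \<in> \<Gamma>" "x \<in> topspace X"
  shows "germ_pt (germ \<Gamma> X g x) = x" "germ_fn (germ \<Gamma> X g x) \<in> \<Gamma>"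
        "agree (germ_fn (germ \<Gamma> X g x)) g x"
proof -
  have "(SOME p. p \<in> germ \<Gamma> X g x) \<in> germ \<Gamma> X g x"
    using self_in[OF assms] by (rule someI)
  then show "germ_pt (germ \<Gamma> X g x) = x" "germ_fn (germ \<Gamma> X g x) \<in> \<Gamma>"
        "agree (germ_fn (germ \<Gamma> X g x)) g x"
    unfolding germ_pt_def germ_fn_def by (simp_all add: germ_mem)
qed

lemma fn_at: "g \<in> \<Gamma> \<Longrightarrow> x \<in> topspace X \<Longrightarrow> germ_fn (germ \<Gamma> X g x) x = g x"
  using fn_pt agree_at by blast

lemma fn_germ: "g \<in> \<Gamma> \<Longrightarrow> x \<in> topspace X \<Longrightarrow> germ \<Gamma> X (germ_fn (germ \<Gamma> X g x)) x = germ \<Gamma> X g x"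
  using fn_pt germ_eq by blast

lemma arr_iff: "c \<in> garr (Germ \<Gamma> X) \<longleftrightarrow> (\<exists>g x. g \<in> \<Gamma> \<and> x \<in> topspace X \<and> c = germ \<Gamma> X g x)"
  by (auto simp: Germ_def)

lemma arrE:
  assumes "c \<in> garr (Germ \<Gamma> X)"
  obtains g x where "g \<in> \<Gamma>" "x \<in> topspace X" "c = germ \<Gamma> X g x"
  using assms arr_iff by blast

lemma arrI: "g \<in> \<Gamma> \<Longrightarrow> x \<in> topspace X \<Longrightarrow> germ \<Gamma> X g x \<in> garr (Germ \<Gamma> X)"
  using arr_iff by blast

lemma src_gm: "g \<in> \<Gamma> \<Longrightarrow> x \<in> topspace X \<Longrightarrow> gsrc (Germ \<Gamma> X) (germ \<Gamma> X g x) = germ \<Gamma> X id x"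
  by (simp add: Germ_def fn_pt)

lemma rng_gm: "g \<in> \<Gamma> \<Longrightarrow> x \<in> topspace X \<Longrightarrow> grng (Germ \<Gamma> X) (germ \<Gamma> X g x) = germ \<Gamma> X id (g x)"
  by (simp add: Germ_def fn_pt fn_at)

lemma agree_comp:
  assumes "h2 \<in> \<Gamma>" "agree g1 g2 (h2 x)" "agree h1 h2 x"
  shows "agree (g1 \<circ> h1) (g2 \<circ> h2) x"
proof -
  obtain U where U: "openin X U" "x \<in> U" "\<forall>y\<in>U. h1 y = h2 y" using assms(3) unfolding agree_def by blast
  obtain V where V: "openin X V" "h2 x \<in> V" "\<forall>y\<in>V. g1 y = g2 y" using assms(2) unfolding agree_def by blast
  let ?W = "U \<inter> {y \<in> topspace X. h2 y \<in> V}"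
  have "openin X ?W" using U V Gam_open_pre[OF assms(1)] by blast
  moreover have "x \<in> ?W" using U V openin_subset by blast
  moreover have "\<forall>y\<in>?W. (g1 \<circ> h1) y = (g2 \<circ> h2) y" using U(3) V(3) by simp
  ultimately show ?thesis unfolding agree_def by blast
qed

lemma mul_gm:
  assumes "g \<in> \<Gamma>" "h \<in> \<Gamma>" "y \<in> topspace X"
  shows "gmul (Germ \<Gamma> X) (germ \<Gamma> X g (h y)) (germ \<Gamma> X h y) = germ \<Gamma> X (g \<circ> h) y"
proof -
  have hy: "h y \<in> topspace X" using Gam_top assms by blast
  let ?c = "germ_fn (germ \<Gamma> X g (h y))" and ?d = "germ_fn (germ \<Gamma> X h y)"
  have "gmul (Germ \<Gamma> X) (germ \<Gamma> X g (h y)) (germ \<Gamma> X h y) = germ \<Gamma> X (?c \<circ> ?d) y"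
    by (simp add: Germ_def fn_pt assms)
  also have "\<dots> = germ \<Gamma> X (g \<circ> h) y"
    apply (rule germ_eq)
    using fn_pt[OF assms(1) hy] fn_pt[OF assms(2,3)] assms comp_in agree_comp by auto
  finally show ?thesis .
qed

lemma inv_gm:
  assumes "g \<in> \<Gamma>" "x \<in> topspace X"
  shows "ginv (Germ \<Gamma> X) (germ \<Gamma> X g x) = germ \<Gamma> X (inv g) (g x)"
proof -
  let ?f = "germ_fn (germ \<Gamma> X g x)"
  have f: "?f \<in> \<Gamma>" "agree ?f g x" using fn_pt assms by auto
  obtain U where U: "openin X U" "x \<in> U" "\<forall>y\<in>U. ?f y = g y" using f unfolding agree_def by blast
  have "ginv (Germ \<Gamma> X) (germ \<Gamma> X g x) = germ \<Gamma> X (inv ?f) (?f x)"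
    by (simp add: Germ_def fn_pt assms)
  also have "\<dots> = germ \<Gamma> X (inv g) (g x)"
  proof -
    have "agree (inv ?f) (inv g) (g x)"
    proof (rule agree_on[of "g ` U"])
      show "openin X (g ` U)" using Gam_open_image assms U by blast
      show "\<forall>y\<in>g ` U. inv ?f y = inv g y"
      proof
        fix z assume "z \<in> g ` U"
        then obtain y where y: "y \<in> U" "z = g y" by blast
        then have "inv ?f z = inv ?f (?f y)" using U(3) by simp
        also have "\<dots> = y" using f(1) Gam_inv_l by blast
        also have "\<dots> = inv g z" using y assms(1) by simp
        finally show "inv ?f z = inv g z" .
      qed
      show "g x \<in> g ` U" using U by blast
    qed
    moreover have "?f x = g x" using f agree_at by blast
    ultimately show ?thesis using germ_eq[OF inv_in[OF f(1)] Gam_top[OF assms]] by simp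
  qed
  finally show ?thesis .
qed

lemma comp_cond:
  assumes "g \<in> \<Gamma>" "x \<in> topspace X" "h \<in> \<Gamma>" "y \<in> topspace X"
  shows "gsrc (Germ \<Gamma> X) (germ \<Gamma> X g x) = grng (Germ \<Gamma> X) (germ \<Gamma> X h y) \<longleftrightarrow> x = h y"
  using assms by (simp add: src_gm rng_gm germ_eq_iff id_in agree_refl)


lemma B_mem: "c \<in> B g A \<longleftrightarrow> (\<exists>x\<in>A. c = germ \<Gamma> X g x)"
  unfolding B_def by blast

lemma germ_in_B: "x \<in> A \<Longrightarrow> germ \<Gamma> X g x \<in> B g A"
  unfolding B_def by blast

lemma T_eq: "gtop (Germ \<Gamma> X) = topology_generated_by {B g A | g A. g \<in> \<Gamma> \<and> openin X A}"
  by (simp add: Germ_def B_def)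

lemma B_open: "g \<in> \<Gamma> \<Longrightarrow> openin X A \<Longrightarrow> openin (gtop (Germ \<Gamma> X)) (B g A)"
  unfolding T_eq by (rule topology_generated_by_Basis) blast

lemma B_sub_arr: "g \<in> \<Gamma> \<Longrightarrow> openin X A \<Longrightarrow> B g A \<subseteq> garr (Germ \<Gamma> X)"
  using openin_subset[of X A] arrI[of g] unfolding B_def by blast

lemma topT: "topspace (gtop (Germ \<Gamma> X)) = garr (Germ \<Gamma> X)"
proof -
  have "\<Union>{B g A | g A. g \<in> \<Gamma> \<and> openin X A} = garr (Germ \<Gamma> X)"
  proof
    show "\<Union>{B g A | g A. g \<in> \<Gamma> \<and> openin X A} \<subseteq> garr (Germ \<Gamma> X)"
      using B_sub_arr by blast
    show "garr (Germ \<Gamma> X) \<subseteq> \<Union>{B g A | g A. g \<in> \<Gamma> \<and> openin X A}"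
    proof
      fix c assume "c \<in> garr (Germ \<Gamma> X)"
      then obtain g x where gx: "g \<in> \<Gamma>" "x \<in> topspace X" "c = germ \<Gamma> X g x" by (rule arrE)
      then have "c \<in> B g (topspace X)" using germ_in_B by blast
      then show "c \<in> \<Union>{B g A | g A. g \<in> \<Gamma> \<and> openin X A}" using gx by blast
    qed
  qed
  then show ?thesis unfolding T_eq topology_generated_by_topspace .
qed

lemma germ_in_B_iff:
  assumes "g \<in> \<Gamma>" "x \<in> topspace X" 
  shows "germ \<Gamma> X g x \<in> B h A \<longleftrightarrow> x \<in> A \<and> agree g h x"
  unfolding B_mem germ_eq_iff[OF assms] by blast

lemma B_int:
  assumes "g1 \<in> \<Gamma>" "g2 \<in> \<Gamma>" "openin X A1" "openin X A2" "c \<in> B g1 A1" "c \<in> B g2 A2"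
  shows "\<exists>A. openin X A \<and> c \<in> B g1 A \<and> B g1 A \<subseteq> B g1 A1 \<inter> B g2 A2"
proof -
  obtain x where x: "x \<in> A1" "c = germ \<Gamma> X g1 x" using assms(5) B_mem by blast
  have xt: "x \<in> topspace X" using x assms(3) openin_subset by blast
  have "x \<in> A2 \<and> agree g1 g2 x" using assms(6) x germ_in_B_iff[OF assms(1) xt] by simp
  then obtain U where U: "openin X U" "x \<in> U" "\<forall>y\<in>U. g1 y = g2 y" "x \<in> A2" unfolding agree_def by blast
  let ?A = "A1 \<inter> A2 \<inter> U"
  have "openin X ?A" using U(1) assms(3,4) by (intro openin_Int)
  moreover have "c \<in> B g1 ?A" using x U(2,4) germ_in_B[of x ?A g1] by blast
  moreover have "B g1 ?A \<subseteq> B g2 A2"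
  proof
    fix d assume "d \<in> B g1 ?A"
    then obtain y where y: "y \<in> ?A" "d = germ \<Gamma> X g1 y" using B_mem by blast
    have yt: "y \<in> topspace X" using y assms(3) openin_subset by blast
    moreover have "agree g1 g2 y" using agree_on[OF U(1) U(3)] y by blast
    ultimately show "d \<in> B g2 A2" using y germ_in_B_iff[OF assms(1) yt] by simp
  qed
  moreover have "B g1 ?A \<subseteq> B g1 A1" unfolding B_def by blast
  ultimately show ?thesis by (intro exI[of _ ?A]) blast
qed

lemma openT_iff:
  "openin (gtop (Germ \<Gamma> X)) W \<longleftrightarrow> W \<subseteq> garr (Germ \<Gamma> X) \<and>
     (\<forall>c\<in>W. \<exists>g A. g \<in> \<Gamma> \<and> openin X A \<and> c \<in> B g A \<and> B g A \<subseteq> W)"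
proof
  assume o: "openin (gtop (Germ \<Gamma> X)) W"
  have "W \<subseteq> garr (Germ \<Gamma> X)" using openin_subset[OF o] topT by simp
  moreover have "generate_topology_on {B g A | g A. g \<in> \<Gamma> \<and> openin X A} W"
    using o unfolding T_eq by (rule openin_topology_generated_by)
  then have "\<forall>c\<in>W. \<exists>g A. g \<in> \<Gamma> \<and> openin X A \<and> c \<in> B g A \<and> B g A \<subseteq> W"
  proof induct
    case Empty
    then show ?case by simp
  next
    case (Int a b)
    show ?case
    proof
      fix c assume c: "c \<in> a \<inter> b"
      obtain g1 A1 where h1: "g1 \<in> \<Gamma>" "openin X A1" "c \<in> B g1 A1" "B g1 A1 \<subseteq> a"
        using Int(2) c by blast
      obtain g2 A2 where h2: "g2 \<in> \<Gamma>" "openin X A2" "c \<in> B g2 A2" "B g2 A2 \<subseteq> b"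
        using Int(4) c by blast
      note h = h1 h2
      obtain A where "openin X A" "c \<in> B g1 A" "B g1 A \<subseteq> B g1 A1 \<inter> B g2 A2"
        using B_int[OF h(1,5,2,6,3,7)] by blast
      then show "\<exists>g A. g \<in> \<Gamma> \<and> openin X A \<and> c \<in> B g A \<and> B g A \<subseteq> a \<inter> b"
        using h by blast
    qed
  next
    case (UN K)
    then show ?case by (meson Union_iff subset_iff)
  next
    case (Basis s)
    then show ?case by blast
  qed
  ultimately show "W \<subseteq> garr (Germ \<Gamma> X) \<and>
     (\<forall>c\<in>W. \<exists>g A. g \<in> \<Gamma> \<and> openin X A \<and> c \<in> B g A \<and> B g A \<subseteq> W)" by blast
next
  assume "W \<subseteq> garr (Germ \<Gamma> X) \<and>
     (\<forall>c\<in>W. \<exists>g A. g \<in> \<Gamma> \<and> openin X A \<and> c \<in> B g A \<and> B g A \<subseteq> W)"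
  then have H: "\<forall>c\<in>W. \<exists>g A. g \<in> \<Gamma> \<and> openin X A \<and> c \<in> B g A \<and> B g A \<subseteq> W" by blast
  show "openin (gtop (Germ \<Gamma> X)) W"
  proof (subst openin_subopen, intro ballI)
    fix c assume "c \<in> W"
    then obtain g A where "g \<in> \<Gamma>" "openin X A" "c \<in> B g A" "B g A \<subseteq> W" using H by blast
    then show "\<exists>T. openin (gtop (Germ \<Gamma> X)) T \<and> c \<in> T \<and> T \<subseteq> W" using B_open by blast
  qed
qed

lemma openT_E:
  assumes "openin (gtop (Germ \<Gamma> X)) W" "c \<in> W"
  obtains g A where "g \<in> \<Gamma>" "openin X A" "c \<in> B g A" "B g A \<subseteq> W"
proof -
  have "\<forall>c\<in>W. \<exists>g A. g \<in> \<Gamma> \<and> openin X A \<and> c \<in> B g A \<and> B g A \<subseteq> W"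
    using assms(1) unfolding openT_iff by blast
  then show ?thesis using assms(2) that by blast
qed

lemma cont_T:
  assumes img: "\<And>c. c \<in> garr (Germ \<Gamma> X) \<Longrightarrow> f c \<in> topspace Y"
    and loc: "\<And>g. g \<in> \<Gamma> \<Longrightarrow> continuous_map X Y (\<lambda>y. f (germ \<Gamma> X g y))"
  shows "continuous_map (gtop (Germ \<Gamma> X)) Y f"
  unfolding continuous_map_def
proof (intro conjI Pi_I allI impI)
  fix c assume "c \<in> topspace (gtop (Germ \<Gamma> X))"
  then show "f c \<in> topspace Y" using img topT by simp
next
  fix U assume U: "openin Y U"
  let ?P = "{c \<in> topspace (gtop (Germ \<Gamma> X)). f c \<in> U}"
  show "openin (gtop (Germ \<Gamma> X)) ?P"
    unfolding openT_iff
  proof (intro conjI ballI)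
    show "?P \<subseteq> garr (Germ \<Gamma> X)" using topT by auto
    fix c assume "c \<in> ?P"
    then have c: "c \<in> garr (Germ \<Gamma> X)" "f c \<in> U" using topT by auto
    obtain g x where gx: "g \<in> \<Gamma>" "x \<in> topspace X" "c = germ \<Gamma> X g x" using c(1) by (rule arrE)
    let ?V = "{y \<in> topspace X. f (germ \<Gamma> X g y) \<in> U}"
    have "openin X ?V" using openin_continuous_map_preimage[OF loc[OF gx(1)] U] .
    moreover have "x \<in> ?V" using gx c by simp
    then have "c \<in> B g ?V" using gx(3) germ_in_B[of x ?V g] by simp
    moreover have "B g ?V \<subseteq> ?P"
    proof
      fix d assume "d \<in> B g ?V"
      then obtain y where y: "y \<in> ?V" "d = germ \<Gamma> X g y" unfolding B_mem by blast
      then have "d \<in> garr (Germ \<Gamma> X)" using arrI[OF gx(1)] by simp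
      then show "d \<in> ?P" using y topT by simp
    qed
    ultimately show "\<exists>g A. g \<in> \<Gamma> \<and> openin X A \<and> c \<in> B g A \<and> B g A \<subseteq> ?P" using gx by blast
  qed
qed

lemma cont_e:
  assumes g: "g \<in> \<Gamma>"
  shows "continuous_map X (gtop (Germ \<Gamma> X)) (\<lambda>y. germ \<Gamma> X g y)"
  unfolding continuous_map_def
proof (intro conjI Pi_I allI impI)
  fix y assume "y \<in> topspace X"
  then show "germ \<Gamma> X g y \<in> topspace (gtop (Germ \<Gamma> X))" using arrI[OF g] topT by simp
next
  fix W assume W: "openin (gtop (Germ \<Gamma> X)) W"
  let ?P = "{y \<in> topspace X. germ \<Gamma> X g y \<in> W}"
  show "openin X ?P"
  proof (subst openin_subopen, intro ballI)
    fix y assume y: "y \<in> ?P"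
    have gyW: "germ \<Gamma> X g y \<in> W" using y by blast
    obtain h A where hA: "h \<in> \<Gamma>" "openin X A" "germ \<Gamma> X g y \<in> B h A" "B h A \<subseteq> W"
      using openT_E[OF W gyW] .
    have yt: "y \<in> topspace X" using y by blast
    have "y \<in> A \<and> agree g h y" using hA(3) germ_in_B_iff[OF g yt] by simp
    then obtain U where U: "openin X U" "y \<in> U" "\<forall>z\<in>U. g z = h z" "y \<in> A" unfolding agree_def by blast
    have "U \<inter> A \<subseteq> ?P"
    proof
      fix z assume z: "z \<in> U \<inter> A"
      then have zt: "z \<in> topspace X" using U openin_subset by blast
      have "agree g h z" using agree_on[OF U(1) U(3)] z by blast
      then have "germ \<Gamma> X g z \<in> B h A" using germ_in_B_iff[OF g zt] z by blast
      then show "z \<in> ?P" using hA zt by blast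
    qed
    moreover have "openin X (U \<inter> A)" using U(1) hA(2) by (rule openin_Int)
    ultimately show "\<exists>T. openin X T \<and> y \<in> T \<and> T \<subseteq> ?P" using U(2,4) by blast
  qed
qed

lemma cont_pt: "continuous_map (gtop (Germ \<Gamma> X)) X germ_pt"
proof (rule cont_T)
  fix c assume "c \<in> garr (Germ \<Gamma> X)"
  then obtain g x where "g \<in> \<Gamma>" "x \<in> topspace X" "c = germ \<Gamma> X g x" by (rule arrE)
  then show "germ_pt c \<in> topspace X" by (simp add: fn_pt)
next
  fix g assume g: "g \<in> \<Gamma>"
  show "continuous_map X X (\<lambda>y. germ_pt (germ \<Gamma> X g y))"
    by (rule continuous_map_eq[OF continuous_map_id]) (simp add: fn_pt g)
qed

lemma E_maps:
  assumes g: "g \<in> \<Gamma>" and A: "openin X A"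
  shows "homeomorphic_maps (subtopology X A) (subtopology (gtop (Germ \<Gamma> X)) (B g A))
           (\<lambda>y. germ \<Gamma> X g y) germ_pt"
  unfolding homeomorphic_maps_def
proof (intro conjI ballI)
  have At: "A \<subseteq> topspace X" using A openin_subset by blast
  show "continuous_map (subtopology X A) (subtopology (gtop (Germ \<Gamma> X)) (B g A)) (\<lambda>y. germ \<Gamma> X g y)"
    apply (rule continuous_map_into_subtopology)
     apply (rule continuous_map_from_subtopology[OF cont_e[OF g]])
    using germ_in_B by (auto simp: topspace_subtopology)
  show "continuous_map (subtopology (gtop (Germ \<Gamma> X)) (B g A)) (subtopology X A) germ_pt"
    apply (rule continuous_map_into_subtopology)
     apply (rule continuous_map_from_subtopology[OF cont_pt])
    using At by (auto simp: topspace_subtopology B_def fn_pt g)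
  fix y assume "y \<in> topspace (subtopology X A)"
  then show "germ_pt (germ \<Gamma> X g y) = y" using At by (simp add: fn_pt g topspace_subtopology)
next
  have At: "A \<subseteq> topspace X" using A openin_subset by blast
  fix c assume "c \<in> topspace (subtopology (gtop (Germ \<Gamma> X)) (B g A))"
  then obtain y where "y \<in> A" "c = germ \<Gamma> X g y" by (auto simp: topspace_subtopology B_def)
  then show "germ \<Gamma> X g (germ_pt c) = c" using At by (auto simp: fn_pt g)
qed

lemma E_map:
  assumes g: "g \<in> \<Gamma>" and A: "openin X A"
  shows "homeomorphic_map (subtopology X A) (subtopology (gtop (Germ \<Gamma> X)) (B g A)) (\<lambda>y. germ \<Gamma> X g y)"
    "homeomorphic_map (subtopology (gtop (Germ \<Gamma> X)) (B g A)) (subtopology X A) germ_pt"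
  using E_maps[OF assms] homeomorphic_maps_map by blast+

lemma Haus_T: "Hausdorff_space (gtop (Germ \<Gamma> X))"
  unfolding Hausdorff_space_def
proof (intro allI impI)
  fix c d assume "c \<in> topspace (gtop (Germ \<Gamma> X)) \<and> d \<in> topspace (gtop (Germ \<Gamma> X)) \<and> c \<noteq> d"
  then have cd: "c \<in> garr (Germ \<Gamma> X)" "d \<in> garr (Germ \<Gamma> X)" "c \<noteq> d" using topT by auto
  obtain g x where gx: "g \<in> \<Gamma>" "x \<in> topspace X" "c = germ \<Gamma> X g x" using cd(1) by (rule arrE)
  obtain h y where hy: "h \<in> \<Gamma>" "y \<in> topspace X" "d = germ \<Gamma> X h y" using cd(2) by (rule arrE)
  show "\<exists>U V. openin (gtop (Germ \<Gamma> X)) U \<and> openin (gtop (Germ \<Gamma> X)) V \<and> c \<in> U \<and> d \<in> V \<and> disjnt U V"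
  proof (cases "x = y")
    case False
    then obtain U V where UV: "openin X U" "openin X V" "x \<in> U" "y \<in> V" "disjnt U V"
      using Haus gx hy unfolding Hausdorff_space_def by blast
    let ?U = "{e \<in> topspace (gtop (Germ \<Gamma> X)). germ_pt e \<in> U}"
    let ?V = "{e \<in> topspace (gtop (Germ \<Gamma> X)). germ_pt e \<in> V}"
    have "openin (gtop (Germ \<Gamma> X)) ?U" "openin (gtop (Germ \<Gamma> X)) ?V"
      using openin_continuous_map_preimage[OF cont_pt] UV by blast+
    moreover have "c \<in> ?U" "d \<in> ?V" using cd topT gx hy UV by (auto simp: fn_pt)
    moreover have "disjnt ?U ?V" using UV(5) unfolding disjnt_def by blast
    ultimately show ?thesis by blast
  next
    case True
    have nag: "\<not> agree g h x" using cd(3) gx hy True germ_eq by blast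
    define k where "k = inv h \<circ> g"
    have k: "k \<in> \<Gamma>" using k_def comp_in inv_in gx hy by blast
    define M where "M = {z \<in> topspace X. k z \<noteq> z}"
    have S: "openin X (supp X k)" using Gam_supp[OF k] .
    have Sdef: "supp X k = X closure_of M" by (simp add: supp_def M_def)
    have kfix: "k z = z \<longleftrightarrow> g z = h z" for z
    proof
      assume "k z = z"
      then have "inv h (g z) = z" unfolding k_def by simp
      then have "h (inv h (g z)) = h z" by simp
      then show "g z = h z" using Gam_inv_r[OF hy(1)] by simp
    next
      assume "g z = h z"
      then show "k z = z" unfolding k_def using Gam_inv_l[OF hy(1)] by simp
    qed
    have xS: "x \<in> supp X k"
    proof (rule ccontr)
      assume nx: "x \<notin> supp X k"
      let ?N = "topspace X - supp X k"
      have "openin X ?N" using closedin_closure_of Sdef by (metis closedin_def)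
      moreover have "\<forall>z\<in>?N. g z = h z"
      proof
        fix z assume z: "z \<in> ?N"
        have "M \<subseteq> supp X k" unfolding Sdef M_def by (rule closure_of_subset) blast
        then have "k z = z" using z unfolding M_def by blast
        then show "g z = h z" using kfix by blast
      qed
      ultimately have "agree g h x" using agree_on gx nx by blast
      then show False using nag by blast
    qed
    let ?U = "B g (supp X k)" and ?V = "B h (supp X k)"
    have "openin (gtop (Germ \<Gamma> X)) ?U" "openin (gtop (Germ \<Gamma> X)) ?V"
      using B_open S gx hy by auto
    moreover have "c \<in> ?U" "d \<in> ?V" using gx hy xS True germ_in_B by auto
    moreover have "disjnt ?U ?V"
    proof (rule ccontr)
      assume "\<not> disjnt ?U ?V"
      then obtain e where e: "e \<in> ?U" "e \<in> ?V" unfolding disjnt_def by blast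
      then obtain z where z: "z \<in> supp X k" "e = germ \<Gamma> X g z" using B_mem by blast
      have zt: "z \<in> topspace X" using z S openin_subset by blast
      have "agree g h z" using e(2) z germ_in_B_iff[OF gx(1) zt] by simp
      then obtain W where W: "openin X W" "z \<in> W" "\<forall>w\<in>W. g w = h w" unfolding agree_def by blast
      have "W \<inter> M = {}" using W(3) kfix unfolding M_def by blast
      then have "W \<inter> X closure_of M = {}" using openin_Int_closure_of_eq_empty[OF W(1)] by blast
      then show False using W(2) z(1) Sdef by blast
    qed
    ultimately show ?thesis by blast
  qed
qed

lemma units_eq: "gunits (Germ \<Gamma> X) = B id (topspace X)"
proof
  show "gunits (Germ \<Gamma> X) \<subseteq> B id (topspace X)"
    unfolding gunits_def by (auto elim!: arrE simp: src_gm germ_in_B)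
  show "B id (topspace X) \<subseteq> gunits (Germ \<Gamma> X)"
  proof
    fix c assume "c \<in> B id (topspace X)"
    then obtain x where x: "x \<in> topspace X" "c = germ \<Gamma> X id x" using B_mem by blast
    then have "c = gsrc (Germ \<Gamma> X) (germ \<Gamma> X id x)" using src_gm id_in by simp
    then show "c \<in> gunits (Germ \<Gamma> X)" unfolding gunits_def using arrI id_in x by blast
  qed
qed

lemma iso_gm: "g \<in> \<Gamma> \<Longrightarrow> x \<in> topspace X \<Longrightarrow>
   germ \<Gamma> X g x \<in> isotropy (Germ \<Gamma> X) \<longleftrightarrow> g x = x"
  unfolding isotropy_def using arrI src_gm rng_gm germ_eq_iff id_in agree_refl by auto

lemma effective_G: "effective (Germ \<Gamma> X)"
  unfolding effective_def units_eq
proof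
  show "gtop (Germ \<Gamma> X) interior_of isotropy (Germ \<Gamma> X) \<subseteq> B id (topspace X)"
  proof
    fix c assume "c \<in> gtop (Germ \<Gamma> X) interior_of isotropy (Germ \<Gamma> X)"
    then obtain W where W: "openin (gtop (Germ \<Gamma> X)) W" "c \<in> W" "W \<subseteq> isotropy (Germ \<Gamma> X)"
      unfolding interior_of_def by blast
    obtain g A where gA: "g \<in> \<Gamma>" "openin X A" "c \<in> B g A" "B g A \<subseteq> W" using W(1,2) by (rule openT_E)
    then obtain x where x: "x \<in> A" "c = germ \<Gamma> X g x" using B_mem by blast
    have At: "A \<subseteq> topspace X" using gA openin_subset by blast
    have "\<forall>y\<in>A. g y = id y"
    proof
      fix y assume y: "y \<in> A"
      then have "germ \<Gamma> X g y \<in> isotropy (Germ \<Gamma> X)" using gA W germ_in_B by blast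
      then show "g y = id y" using iso_gm gA At y by auto
    qed
    then have "agree g id x" using agree_on gA x by blast
    then have "c = germ \<Gamma> X id x" using germ_eq gA x At by blast
    then show "c \<in> B id (topspace X)" using x At germ_in_B by blast
  qed
  show "B id (topspace X) \<subseteq> gtop (Germ \<Gamma> X) interior_of isotropy (Germ \<Gamma> X)"
  proof (rule interior_of_maximal)
    show "openin (gtop (Germ \<Gamma> X)) (B id (topspace X))" using B_open id_in by blast
    show "B id (topspace X) \<subseteq> isotropy (Germ \<Gamma> X)"
      using iso_gm id_in unfolding B_def by auto
  qed
qed


lemma mul_gm':
  assumes "g \<in> \<Gamma>" "h \<in> \<Gamma>" "y \<in> topspace X" "x = h y"
  shows "gmul (Germ \<Gamma> X) (germ \<Gamma> X g x) (germ \<Gamma> X h y) = germ \<Gamma> X (g \<circ> h) y"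
  using mul_gm[OF assms(1-3)] assms(4) by simp

lemma inv_comp_l: "g \<in> \<Gamma> \<Longrightarrow> inv g \<circ> g = id"
  by (rule ext) simp
lemma inv_comp_r: "g \<in> \<Gamma> \<Longrightarrow> g \<circ> inv g = id"
  by (rule ext) simp

lemma groupoid_G: "groupoid (Germ \<Gamma> X)"
proof -
  let ?G = "Germ \<Gamma> X"
  have A1: "\<forall>c\<in>garr ?G. gsrc ?G c \<in> garr ?G \<and> grng ?G c \<in> garr ?G \<and> ginv ?G c \<in> garr ?G"
  proof
    fix c assume "c \<in> garr ?G"
    then obtain g x where gx: "g \<in> \<Gamma>" "x \<in> topspace X" "c = germ \<Gamma> X g x" by (rule arrE)
    have gxt: "g x \<in> topspace X" using Gam_top gx by blast
    show "gsrc ?G c \<in> garr ?G \<and> grng ?G c \<in> garr ?G \<and> ginv ?G c \<in> garr ?G"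
      using gx gxt by (simp add: src_gm rng_gm inv_gm arrI id_in inv_in)
  qed
  have A2: "\<forall>c\<in>garr ?G. gsrc ?G (gsrc ?G c) = gsrc ?G c \<and> grng ?G (gsrc ?G c) = gsrc ?G c \<and>
                 gsrc ?G (grng ?G c) = grng ?G c \<and> grng ?G (grng ?G c) = grng ?G c"
  proof
    fix c assume "c \<in> garr ?G"
    then obtain g x where gx: "g \<in> \<Gamma>" "x \<in> topspace X" "c = germ \<Gamma> X g x" by (rule arrE)
    have gxt: "g x \<in> topspace X" using Gam_top gx by blast
    show "gsrc ?G (gsrc ?G c) = gsrc ?G c \<and> grng ?G (gsrc ?G c) = gsrc ?G c \<and>
                 gsrc ?G (grng ?G c) = grng ?G c \<and> grng ?G (grng ?G c) = grng ?G c"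
      using gx gxt by (simp add: src_gm rng_gm id_in)
  qed
  have A3: "\<forall>c\<in>garr ?G. \<forall>d\<in>garr ?G. gsrc ?G c = grng ?G d \<longrightarrow>
        gmul ?G c d \<in> garr ?G \<and> gsrc ?G (gmul ?G c d) = gsrc ?G d \<and> grng ?G (gmul ?G c d) = grng ?G c"
  proof (intro ballI impI)
    fix c d assume c: "c \<in> garr ?G" and d: "d \<in> garr ?G" and cd: "gsrc ?G c = grng ?G d"
    obtain g x where gx: "g \<in> \<Gamma>" "x \<in> topspace X" "c = germ \<Gamma> X g x" using c by (rule arrE)
    obtain h y where hy: "h \<in> \<Gamma>" "y \<in> topspace X" "d = germ \<Gamma> X h y" using d by (rule arrE)
    have xy: "x = h y" using cd gx hy comp_cond by simp
    have m: "gmul ?G c d = germ \<Gamma> X (g \<circ> h) y" using mul_gm'[OF gx(1) hy(1,2) xy] gx hy by simp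
    have gh: "g \<circ> h \<in> \<Gamma>" using comp_in gx hy by blast
    show "gmul ?G c d \<in> garr ?G \<and> gsrc ?G (gmul ?G c d) = gsrc ?G d \<and> grng ?G (gmul ?G c d) = grng ?G c"
      using m gh hy gx xy by (simp add: arrI src_gm rng_gm)
  qed
  have A4: "\<forall>f\<in>garr ?G. \<forall>g\<in>garr ?G. \<forall>h\<in>garr ?G. gsrc ?G f = grng ?G g \<and> gsrc ?G g = grng ?G h \<longrightarrow>
        gmul ?G (gmul ?G f g) h = gmul ?G f (gmul ?G g h)"
  proof (intro ballI impI)
    fix c1 c2 c3 assume c1: "c1 \<in> garr ?G" and c2: "c2 \<in> garr ?G" and c3: "c3 \<in> garr ?G"
      and cc: "gsrc ?G c1 = grng ?G c2 \<and> gsrc ?G c2 = grng ?G c3"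
    obtain f z where fz: "f \<in> \<Gamma>" "z \<in> topspace X" "c1 = germ \<Gamma> X f z" using c1 by (rule arrE)
    obtain g x where gx: "g \<in> \<Gamma>" "x \<in> topspace X" "c2 = germ \<Gamma> X g x" using c2 by (rule arrE)
    obtain h y where hy: "h \<in> \<Gamma>" "y \<in> topspace X" "c3 = germ \<Gamma> X h y" using c3 by (rule arrE)
    have zx: "z = g x" using cc fz gx comp_cond by simp
    have xy: "x = h y" using cc gx hy comp_cond by simp
    have fg: "f \<circ> g \<in> \<Gamma>" "g \<circ> h \<in> \<Gamma>" using comp_in fz gx hy by blast+
    have e1: "gmul ?G c1 c2 = germ \<Gamma> X (f \<circ> g) x" using mul_gm'[OF fz(1) gx(1,2) zx] fz gx by simp
    have e2: "gmul ?G (germ \<Gamma> X (f \<circ> g) x) c3 = germ \<Gamma> X ((f \<circ> g) \<circ> h) y"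
      using mul_gm'[OF fg(1) hy(1,2) xy] hy by simp
    have e3: "gmul ?G c2 c3 = germ \<Gamma> X (g \<circ> h) y" using mul_gm'[OF gx(1) hy(1,2) xy] gx hy by simp
    have zz: "z = (g \<circ> h) y" using zx xy by simp
    have e4: "gmul ?G c1 (germ \<Gamma> X (g \<circ> h) y) = germ \<Gamma> X (f \<circ> (g \<circ> h)) y"
      unfolding fz(3) by (rule mul_gm'[OF fz(1) fg(2) hy(2) zz])
    show "gmul ?G (gmul ?G c1 c2) c3 = gmul ?G c1 (gmul ?G c2 c3)"
      using e1 e2 e3 e4 by (simp add: comp_assoc)
  qed
  have A5: "\<forall>c\<in>garr ?G. gmul ?G c (gsrc ?G c) = c \<and> gmul ?G (grng ?G c) c = c"
  proof
    fix c assume "c \<in> garr ?G"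
    then obtain g x where gx: "g \<in> \<Gamma>" "x \<in> topspace X" "c = germ \<Gamma> X g x" by (rule arrE)
    have 1: "gmul ?G c (gsrc ?G c) = c"
      using mul_gm'[OF gx(1) id_in gx(2), of x] gx by (simp add: src_gm)
    have 2: "gmul ?G (grng ?G c) c = c"
      using mul_gm'[OF id_in gx(1) gx(2), of "g x"] gx by (simp add: rng_gm)
    show "gmul ?G c (gsrc ?G c) = c \<and> gmul ?G (grng ?G c) c = c" using 1 2 by blast
  qed
  have A6: "\<forall>c\<in>garr ?G. gsrc ?G (ginv ?G c) = grng ?G c \<and> grng ?G (ginv ?G c) = gsrc ?G c \<and>
        gmul ?G (ginv ?G c) c = gsrc ?G c \<and> gmul ?G c (ginv ?G c) = grng ?G c"
  proof
    fix c assume "c \<in> garr ?G"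
    then obtain g x where gx: "g \<in> \<Gamma>" "x \<in> topspace X" "c = germ \<Gamma> X g x" by (rule arrE)
    have gxt: "g x \<in> topspace X" using Gam_top gx by blast
    have ig: "inv g \<in> \<Gamma>" using inv_in gx by blast
    have i: "ginv ?G c = germ \<Gamma> X (inv g) (g x)" using inv_gm gx by simp
    have 1: "gsrc ?G (ginv ?G c) = grng ?G c" using i gx gxt ig by (simp add: src_gm rng_gm)
    have 2: "grng ?G (ginv ?G c) = gsrc ?G c" using i gx gxt ig by (simp add: src_gm rng_gm)
    have 3: "gmul ?G (ginv ?G c) c = gsrc ?G c"
      using mul_gm'[OF ig gx(1) gx(2), of "g x"] i gx by (simp add: src_gm inv_comp_l)
    have 4: "gmul ?G c (ginv ?G c) = grng ?G c"
      using mul_gm'[OF gx(1) ig gxt, of x] i gx by (simp add: rng_gm inv_comp_r)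
    show "gsrc ?G (ginv ?G c) = grng ?G c \<and> grng ?G (ginv ?G c) = gsrc ?G c \<and>
        gmul ?G (ginv ?G c) c = gsrc ?G c \<and> gmul ?G c (ginv ?G c) = grng ?G c"
      using 1 2 3 4 by blast
  qed
  show ?thesis unfolding groupoid_def by (intro conjI A1 A2 A3 A4 A5 A6)
qed

lemma cont_src: "continuous_map (gtop (Germ \<Gamma> X)) (gtop (Germ \<Gamma> X)) (gsrc (Germ \<Gamma> X))"
proof (rule cont_T)
  fix c assume "c \<in> garr (Germ \<Gamma> X)"
  then obtain g x where gx: "g \<in> \<Gamma>" "x \<in> topspace X" "c = germ \<Gamma> X g x" by (rule arrE)
  then show "gsrc (Germ \<Gamma> X) c \<in> topspace (gtop (Germ \<Gamma> X))" by (simp add: topT src_gm arrI id_in)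
next
  fix g assume g: "g \<in> \<Gamma>"
  show "continuous_map X (gtop (Germ \<Gamma> X)) (\<lambda>y. gsrc (Germ \<Gamma> X) (germ \<Gamma> X g y))"
    by (rule continuous_map_eq[OF cont_e[OF id_in]]) (simp add: src_gm g)
qed

lemma cont_rng: "continuous_map (gtop (Germ \<Gamma> X)) (gtop (Germ \<Gamma> X)) (grng (Germ \<Gamma> X))"
proof (rule cont_T)
  fix c assume "c \<in> garr (Germ \<Gamma> X)"
  then obtain g x where gx: "g \<in> \<Gamma>" "x \<in> topspace X" "c = germ \<Gamma> X g x" by (rule arrE)
  then show "grng (Germ \<Gamma> X) c \<in> topspace (gtop (Germ \<Gamma> X))" by (simp add: topT rng_gm arrI id_in Gam_top)
next
  fix g assume g: "g \<in> \<Gamma>"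
  show "continuous_map X (gtop (Germ \<Gamma> X)) (\<lambda>y. grng (Germ \<Gamma> X) (germ \<Gamma> X g y))"
    by (rule continuous_map_eq[OF continuous_map_compose[OF Gam_cont[OF g] cont_e[OF id_in]]])
       (simp add: rng_gm g)
qed

lemma cont_inv: "continuous_map (gtop (Germ \<Gamma> X)) (gtop (Germ \<Gamma> X)) (ginv (Germ \<Gamma> X))"
proof (rule cont_T)
  fix c assume "c \<in> garr (Germ \<Gamma> X)"
  then obtain g x where gx: "g \<in> \<Gamma>" "x \<in> topspace X" "c = germ \<Gamma> X g x" by (rule arrE)
  then show "ginv (Germ \<Gamma> X) c \<in> topspace (gtop (Germ \<Gamma> X))" by (simp add: topT inv_gm arrI inv_in Gam_top)
next
  fix g assume g: "g \<in> \<Gamma>"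
  show "continuous_map X (gtop (Germ \<Gamma> X)) (\<lambda>y. ginv (Germ \<Gamma> X) (germ \<Gamma> X g y))"
    by (rule continuous_map_eq[OF continuous_map_compose[OF Gam_cont[OF g] cont_e[OF inv_in[OF g]]]])
       (simp add: inv_gm g)
qed

lemma mul_arr:
  assumes c: "c \<in> garr (Germ \<Gamma> X)" and d: "d \<in> garr (Germ \<Gamma> X)"
    and cd: "gsrc (Germ \<Gamma> X) c = grng (Germ \<Gamma> X) d"
  shows "gmul (Germ \<Gamma> X) c d \<in> garr (Germ \<Gamma> X)"
proof -
  obtain g x where gx: "g \<in> \<Gamma>" "x \<in> topspace X" "c = germ \<Gamma> X g x" using c by (rule arrE)
  obtain h y where hy: "h \<in> \<Gamma>" "y \<in> topspace X" "d = germ \<Gamma> X h y" using d by (rule arrE)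
  have xy: "x = h y" using cd gx hy comp_cond by simp
  have "gmul (Germ \<Gamma> X) c d = germ \<Gamma> X (g \<circ> h) y" using mul_gm'[OF gx(1) hy(1,2) xy] gx hy by simp
  then show ?thesis using arrI[OF comp_in[OF gx(1) hy(1)] hy(2)] by simp
qed

lemma cont_mul:
  "continuous_map (subtopology (prod_topology (gtop (Germ \<Gamma> X)) (gtop (Germ \<Gamma> X))) (composable (Germ \<Gamma> X)))
     (gtop (Germ \<Gamma> X)) (\<lambda>(g, h). gmul (Germ \<Gamma> X) g h)"
  unfolding continuous_map_def
proof (intro conjI Pi_I allI impI)
  let ?G = "Germ \<Gamma> X"
  let ?S = "subtopology (prod_topology (gtop ?G) (gtop ?G)) (composable ?G)"
  have topS: "topspace ?S = composable ?G"
    unfolding composable_def by (auto simp: topT)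
  {
    fix p assume "p \<in> topspace ?S"
    then have "p \<in> composable ?G" using topS by simp
    then obtain c d where p: "p = (c, d)" "c \<in> garr ?G" "d \<in> garr ?G" "gsrc ?G c = grng ?G d"
      unfolding composable_def by blast
    then have "gmul ?G c d \<in> garr ?G" using mul_arr by blast
    then show "(\<lambda>(g, h). gmul ?G g h) p \<in> topspace (gtop ?G)" using p topT by simp
  }
  fix W assume W: "openin (gtop ?G) W"
  let ?P = "{p \<in> topspace ?S. (\<lambda>(g, h). gmul ?G g h) p \<in> W}"
  show "openin ?S ?P"
  proof (subst openin_subopen, intro ballI)
    fix p assume pP: "p \<in> ?P"
    then have pc: "p \<in> composable ?G" "(\<lambda>(g, h). gmul ?G g h) p \<in> W" using topS by auto
    then obtain c d where p0: "p = (c, d)" "c \<in> garr ?G" "d \<in> garr ?G" "gsrc ?G c = grng ?G d"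
      unfolding composable_def by blast
    have "gmul ?G c d \<in> W" using pc(2) p0(1) by simp
    note p = p0 this
    obtain g x where gx: "g \<in> \<Gamma>" "x \<in> topspace X" "c = germ \<Gamma> X g x" using p(2) by (rule arrE)
    obtain h y where hy: "h \<in> \<Gamma>" "y \<in> topspace X" "d = germ \<Gamma> X h y" using p(3) by (rule arrE)
    have xy: "x = h y" using p(4) gx hy comp_cond by simp
    have gh: "g \<circ> h \<in> \<Gamma>" using comp_in gx hy by blast
    let ?V = "{z \<in> topspace X. germ \<Gamma> X (g \<circ> h) z \<in> W}"
    have V: "openin X ?V" using openin_continuous_map_preimage[OF cont_e[OF gh] W] .
    have yV: "y \<in> ?V" using p(5) mul_gm'[OF gx(1) hy(1,2) xy] gx hy by simp
    have hV: "openin X (h ` ?V)" using Gam_open_image[OF hy(1) V] .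
    let ?N = "B g (h ` ?V) \<times> B h ?V"
    have N: "openin (prod_topology (gtop ?G) (gtop ?G)) ?N"
      using B_open[OF gx(1) hV] B_open[OF hy(1) V] by (simp add: openin_prod_Times_iff)
    have NS: "openin ?S (composable ?G \<inter> ?N)" using openin_subtopology_Int2[OF N] .
    have pN: "p \<in> composable ?G \<inter> ?N"
    proof -
      have "c \<in> B g (h ` ?V)" using gx xy yV germ_in_B[of x "h ` ?V" g] by blast
      moreover have "d \<in> B h ?V" using hy yV germ_in_B[of y ?V h] by blast
      moreover have "p \<in> composable ?G" using p unfolding composable_def by simp
      ultimately show ?thesis using p by simp
    qed
    have NP: "composable ?G \<inter> ?N \<subseteq> ?P"
    proof
      fix q assume q: "q \<in> composable ?G \<inter> ?N"
      then obtain c' d' where q': "q = (c', d')" "c' \<in> B g (h ` ?V)" "d' \<in> B h ?V"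
        "gsrc ?G c' = grng ?G d'" unfolding composable_def by blast
      obtain z where z: "z \<in> h ` ?V" "c' = germ \<Gamma> X g z" using q'(2) B_mem by blast
      obtain y' where y': "y' \<in> ?V" "d' = germ \<Gamma> X h y'" using q'(3) B_mem by blast
      have zt: "z \<in> topspace X" using z(1) hV openin_subset by blast
      have y't: "y' \<in> topspace X" using y' by blast
      have zy: "z = h y'" using q'(4) z y' comp_cond[OF gx(1) zt hy(1) y't] by simp
      have "gmul ?G c' d' = germ \<Gamma> X (g \<circ> h) y'" using mul_gm'[OF gx(1) hy(1) y't zy] z y' by simp
      then have "gmul ?G c' d' \<in> W" using y' by simp
      moreover have "q \<in> topspace ?S" using q topS by blast
      ultimately show "q \<in> ?P" using q' by simp
    qed
    show "\<exists>T. openin ?S T \<and> p \<in> T \<and> T \<subseteq> ?P" using NS pN NP by blast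
  qed
qed

lemma top_groupoid_G: "top_groupoid (Germ \<Gamma> X)"
  unfolding top_groupoid_def
  using groupoid_G topT cont_src cont_rng cont_inv cont_mul by blast

lemma src_B: "g \<in> \<Gamma> \<Longrightarrow> A \<subseteq> topspace X \<Longrightarrow> gsrc (Germ \<Gamma> X) ` B g A = B id A"
proof
  assume g: "g \<in> \<Gamma>" and A: "A \<subseteq> topspace X"
  show "gsrc (Germ \<Gamma> X) ` B g A \<subseteq> B id A"
  proof
    fix e assume "e \<in> gsrc (Germ \<Gamma> X) ` B g A"
    then obtain d where d: "d \<in> B g A" "e = gsrc (Germ \<Gamma> X) d" by blast
    then obtain x where x: "x \<in> A" "d = germ \<Gamma> X g x" unfolding B_mem by blast
    have "x \<in> topspace X" using x A by blast
    then have "e = germ \<Gamma> X id x" using d x g src_gm by simp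
    then show "e \<in> B id A" using x germ_in_B by simp
  qed
  show "B id A \<subseteq> gsrc (Germ \<Gamma> X) ` B g A"
  proof
    fix e assume "e \<in> B id A"
    then obtain x where x: "x \<in> A" "e = germ \<Gamma> X id x" unfolding B_mem by blast
    then have "e = gsrc (Germ \<Gamma> X) (germ \<Gamma> X g x)" using A g src_gm by auto
    moreover have "germ \<Gamma> X g x \<in> B g A" using x germ_in_B by blast
    ultimately show "e \<in> gsrc (Germ \<Gamma> X) ` B g A" by blast
  qed
qed

lemma etale_G: "etale_groupoid (Germ \<Gamma> X)"
  unfolding etale_groupoid_def local_homeo_def
proof (intro conjI ballI)
  let ?G = "Germ \<Gamma> X"
  let ?T = "gtop ?G"
  show "top_groupoid ?G" by (rule top_groupoid_G)
  have U: "gunits ?G = B id (topspace X)" by (rule units_eq)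
  show "continuous_map ?T (subtopology ?T (gunits ?G)) (gsrc ?G)"
    apply (rule continuous_map_into_subtopology[OF cont_src])
    unfolding gunits_def topT by blast
  fix c assume "c \<in> topspace ?T"
  then have "c \<in> garr ?G" using topT by simp
  then obtain g x where gx: "g \<in> \<Gamma>" "x \<in> topspace X" "c = germ \<Gamma> X g x" by (rule arrE)
  let ?U = "B g (topspace X)"
  have oU: "openin ?T ?U" using B_open gx by blast
  have cU: "c \<in> ?U" using gx germ_in_B by blast
  have img: "gsrc ?G ` ?U = gunits ?G" using src_B[OF gx(1)] U by simp
  have o2: "openin (subtopology ?T (gunits ?G)) (gsrc ?G ` ?U)"
    unfolding img by (simp add: openin_subtopology_refl U B_sub_arr id_in topT)
  have h1: "homeomorphic_map (subtopology ?T ?U) (subtopology X (topspace X)) germ_pt"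
    using E_map(2)[OF gx(1) openin_topspace] .
  have h2: "homeomorphic_map (subtopology X (topspace X)) (subtopology ?T (B id (topspace X))) (\<lambda>y. germ \<Gamma> X id y)"
    using E_map(1)[OF id_in openin_topspace] .
  have h3: "homeomorphic_map (subtopology ?T ?U) (subtopology ?T (B id (topspace X))) ((\<lambda>y. germ \<Gamma> X id y) \<circ> germ_pt)"
    using homeomorphic_map_compose[OF h1 h2] .
  have h4: "homeomorphic_map (subtopology ?T ?U) (subtopology ?T (B id (topspace X))) (gsrc ?G)"
  proof (rule homeomorphic_map_eq[OF h3])
    fix e assume "e \<in> topspace (subtopology ?T ?U)"
    then obtain y where y: "y \<in> topspace X" "e = germ \<Gamma> X g y" by (auto simp: B_mem)
    then show "((\<lambda>y. germ \<Gamma> X id y) \<circ> germ_pt) e = gsrc ?G e" using gx by (simp add: fn_pt src_gm)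
  qed
  have "subtopology (subtopology ?T (gunits ?G)) (gsrc ?G ` ?U) = subtopology ?T (B id (topspace X))"
    unfolding img subtopology_subtopology U by simp
  then show "\<exists>U. openin ?T U \<and> c \<in> U \<and> openin (subtopology ?T (gunits ?G)) (gsrc ?G ` U) \<and>
      homeomorphic_map (subtopology ?T U) (subtopology (subtopology ?T (gunits ?G)) (gsrc ?G ` U)) (gsrc ?G)"
    using oU cU o2 h4 by (intro exI[of _ ?U]) simp
qed

end

lemma boolean_homeo:
  assumes h: "homeomorphic_map X Y f" and b: "boolean_space X"
  shows "boolean_space Y"
  unfolding boolean_space_def
proof (intro conjI allI impI)
  show "Hausdorff_space Y"
    using b homeomorphic_Hausdorff_space[OF homeomorphic_map_imp_homeomorphic_space[OF h]]
    unfolding boolean_space_def by blast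
  fix U y assume Uy: "openin Y U \<and> y \<in> U"
  obtain g where hg: "homeomorphic_maps X Y f g" using h homeomorphic_map_maps by blast
  have cf: "continuous_map X Y f" using h homeomorphic_imp_continuous_map by blast
  have cg: "continuous_map Y X g" using hg unfolding homeomorphic_maps_def by blast
  have yt: "y \<in> topspace Y" using Uy openin_subset by blast
  have gy1: "g y \<in> topspace X" using continuous_map_image_subset_topspace[OF cg] yt by blast
  have gy2: "f (g y) = y" using hg yt unfolding homeomorphic_maps_def by blast
  note gy = gy1 gy2
  let ?P = "{x \<in> topspace X. f x \<in> U}"
  have P: "openin X ?P" using openin_continuous_map_preimage[OF cf] Uy by blast
  have "g y \<in> ?P" using gy Uy by simp
  then obtain V where V: "openin X V" "compactin X V" "g y \<in> V" "V \<subseteq> ?P"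
    using b P unfolding boolean_space_def by blast
  have "openin Y (f ` V)" using homeomorphic_map_openness[OF h] V openin_subset by blast
  moreover have "compactin Y (f ` V)" using image_compactin[OF V(2) cf] .
  moreover have "y \<in> f ` V" using V(3) gy by (metis imageI)
  moreover have "f ` V \<subseteq> U" using V(4) by blast
  ultimately show "\<exists>V. openin Y V \<and> compactin Y V \<and> y \<in> V \<and> V \<subseteq> U" by blast
qed

context germ_ctx
begin

lemma ample_G: "ample (Germ \<Gamma> X)"
  unfolding ample_def
proof
  show "etale_groupoid (Germ \<Gamma> X)" by (rule etale_G)
  have "homeomorphic_map (subtopology X (topspace X)) (subtopology (gtop (Germ \<Gamma> X)) (B id (topspace X))) (\<lambda>y. germ \<Gamma> X id y)"
    using E_map(1)[OF id_in openin_topspace] .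
  then have "homeomorphic_map X (subtopology (gtop (Germ \<Gamma> X)) (gunits (Germ \<Gamma> X))) (\<lambda>y. germ \<Gamma> X id y)"
    by (simp add: units_eq)
  then show "boolean_space (subtopology (gtop (Germ \<Gamma> X)) (gunits (Germ \<Gamma> X)))"
    using boolean_homeo bool by blast
qed

lemma gpoid_obj_G: "gpoid_obj (Germ \<Gamma> X)"
  unfolding gpoid_obj_def using ample_G effective_G Haus_T by blast

end

lemma local_homeo_open:
  assumes lh: "local_homeo X Y f" and U: "openin X U"
  shows "openin Y (f ` U)"
proof (subst openin_subopen, intro ballI)
  fix z assume "z \<in> f ` U"
  then obtain x where x: "x \<in> U" "z = f x" by blast
  have xt: "x \<in> topspace X" using x U openin_subset by blast
  obtain V where V: "openin X V" "x \<in> V" "openin Y (f ` V)"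
      "homeomorphic_map (subtopology X V) (subtopology Y (f ` V)) f"
    using lh xt unfolding local_homeo_def by blast
  have VU: "openin (subtopology X V) (V \<inter> U)" using openin_subtopology_Int2[OF U] .
  have sub: "V \<inter> U \<subseteq> topspace (subtopology X V)" using U openin_subset by auto
  have "openin (subtopology Y (f ` V)) (f ` (V \<inter> U))"
    using homeomorphic_map_openness[OF V(4) sub] VU by simp
  then have "openin Y (f ` (V \<inter> U))" using openin_trans_full V(3) by blast
  moreover have "z \<in> f ` (V \<inter> U)" using x V(2) by blast
  moreover have "f ` (V \<inter> U) \<subseteq> f ` U" by blast
  ultimately show "\<exists>T. openin Y T \<and> z \<in> T \<and> T \<subseteq> f ` U" by blast
qed

lemma WD:
  assumes obj1: "spatg_obj \<Gamma>1 X1" and obj2: "spatg_obj \<Gamma>2 X2"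
    and cont: "continuous_map X1 X2 \<phi>"
    and opn0: "\<forall>U. openin X1 U \<longrightarrow> openin X2 (\<phi> ` U)"
    and ex0: "\<forall>g\<in>\<Gamma>1. \<exists>g'\<in>\<Gamma>2. intertwines X1 \<phi> g g'"
    and g: "g \<in> \<Gamma>1" and x: "x \<in> topspace X1" and g': "g' \<in> \<Gamma>2"
    and it: "intertwines X1 \<phi> g g'"
  shows "Germ_map \<Gamma>1 X1 \<Gamma>2 X2 \<phi> (germ \<Gamma>1 X1 g x) = germ \<Gamma>2 X2 g' (\<phi> x)"
proof -
  interpret G1: germ_ctx \<Gamma>1 X1 by (rule germ_ctx.intro[OF obj1])
  interpret G2: germ_ctx \<Gamma>2 X2 by (rule germ_ctx.intro[OF obj2])
  have opn: "openin X2 (\<phi> ` U)" if "openin X1 U" for U using opn0 that by blast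
  have ex: "\<exists>g'\<in>\<Gamma>2. intertwines X1 \<phi> g g'" if "g \<in> \<Gamma>1" for g using ex0 that by blast
  define t where "t = germ_fn (germ \<Gamma>1 X1 g x)"
  have t: "t \<in> \<Gamma>1" "G1.agree t g x" using G1.fn_pt[OF g x] unfolding t_def by auto
  have pt: "germ_pt (germ \<Gamma>1 X1 g x) = x" using G1.fn_pt[OF g x] by simp
  define g'' where "g'' = (SOME g'. g' \<in> \<Gamma>2 \<and> intertwines X1 \<phi> t g')"
  have "\<exists>g'. g' \<in> \<Gamma>2 \<and> intertwines X1 \<phi> t g'" using ex[OF t(1)] by blast
  then have "g'' \<in> \<Gamma>2 \<and> intertwines X1 \<phi> t g''" unfolding g''_def by (rule someI_ex)
  then have g'': "g'' \<in> \<Gamma>2" "intertwines X1 \<phi> t g''" by blast+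
  have GM: "Germ_map \<Gamma>1 X1 \<Gamma>2 X2 \<phi> (germ \<Gamma>1 X1 g x) = germ \<Gamma>2 X2 g'' (\<phi> x)"
    unfolding Germ_map_def pt t_def[symmetric] g''_def ..
  obtain U where U: "openin X1 U" "x \<in> U" "\<forall>y\<in>U. t y = g y" using t(2) unfolding G1.agree_def by blast
  have Ut: "U \<subseteq> topspace X1" using U openin_subset by blast
  have "G2.agree g'' g' (\<phi> x)"
  proof (rule G2.agree_on[OF opn[OF U(1)]])
    show "\<phi> x \<in> \<phi> ` U" using U by blast
    show "\<forall>z\<in>\<phi> ` U. g'' z = g' z"
    proof
      fix z assume "z \<in> \<phi> ` U"
      then obtain y where y: "y \<in> U" "z = \<phi> y" by blast
      have yt: "y \<in> topspace X1" using y Ut by blast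
      have "g'' z = \<phi> (t y)" using g''(2) yt y unfolding intertwines_def by simp
      also have "\<dots> = \<phi> (g y)" using U(3) y by simp
      also have "\<dots> = g' z" using it yt y unfolding intertwines_def by simp
      finally show "g'' z = g' z" .
    qed
  qed
  moreover have "\<phi> x \<in> topspace X2" using cont x continuous_map_image_subset_topspace by blast
  ultimately show ?thesis using GM G2.germ_eq[OF g''(1)] by simp
qed

lemma mor_facts:
  assumes "spatg_mor \<Gamma>1 X1 \<Gamma>2 X2 \<phi>"
  shows "continuous_map X1 X2 \<phi>" "\<forall>U. openin X1 U \<longrightarrow> openin X2 (\<phi> ` U)"
    "\<forall>g\<in>\<Gamma>1. \<exists>g'\<in>\<Gamma>2. intertwines X1 \<phi> g g'"
proof -
  have lh: "local_homeo X1 X2 \<phi>" using assms unfolding spatg_mor_def by blast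
  then show "continuous_map X1 X2 \<phi>" unfolding local_homeo_def by blast
  show "\<forall>U. openin X1 U \<longrightarrow> openin X2 (\<phi> ` U)" using local_homeo_open[OF lh] by blast
  show "\<forall>g\<in>\<Gamma>1. \<exists>g'\<in>\<Gamma>2. intertwines X1 \<phi> g g'" using assms unfolding spatg_mor_def by blast
qed

lemma etale_map:
  assumes obj1: "spatg_obj \<Gamma>1 X1" and obj2: "spatg_obj \<Gamma>2 X2"
    and mor: "spatg_mor \<Gamma>1 X1 \<Gamma>2 X2 \<phi>"
  shows "etale_hom (Germ \<Gamma>1 X1) (Germ \<Gamma>2 X2) (Germ_map \<Gamma>1 X1 \<Gamma>2 X2 \<phi>)"
proof -
  interpret G1: germ_ctx \<Gamma>1 X1 by (rule germ_ctx.intro[OF obj1])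
  interpret G2: germ_ctx \<Gamma>2 X2 by (rule germ_ctx.intro[OF obj2])
  note mf = mor_facts[OF mor]
  note wd = WD[OF obj1 obj2 mf(1) mf(2) mf(3)]
  let ?F = "Germ_map \<Gamma>1 X1 \<Gamma>2 X2 \<phi>"
  let ?G1 = "Germ \<Gamma>1 X1" and ?G2 = "Germ \<Gamma>2 X2"
  have phit: "\<phi> x \<in> topspace X2" if "x \<in> topspace X1" for x
    using mf(1) that continuous_map_image_subset_topspace by blast
  have F_arr: "?F c \<in> garr ?G2" if c: "c \<in> garr ?G1" for c
  proof -
    obtain g x where gx: "g \<in> \<Gamma>1" "x \<in> topspace X1" "c = germ \<Gamma>1 X1 g x" using c by (rule G1.arrE)
    obtain g' where g': "g' \<in> \<Gamma>2" "intertwines X1 \<phi> g g'" using bspec[OF mf(3) gx(1)] by blast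
    have "?F c = germ \<Gamma>2 X2 g' (\<phi> x)" using wd[OF gx(1,2) g'] gx(3) by simp
    then show ?thesis using G2.arrI[OF g'(1) phit[OF gx(2)]] by simp
  qed
  have hom: "groupoid_hom ?G1 ?G2 ?F"
    unfolding groupoid_hom_def
  proof (intro conjI ballI impI)
    fix c assume "c \<in> garr ?G1" then show "?F c \<in> garr ?G2" by (rule F_arr)
  next
    fix c d assume c: "c \<in> garr ?G1" and d: "d \<in> garr ?G1" and cd: "gsrc ?G1 c = grng ?G1 d"
    obtain g x where gx: "g \<in> \<Gamma>1" "x \<in> topspace X1" "c = germ \<Gamma>1 X1 g x" using c by (rule G1.arrE)
    obtain h y where hy: "h \<in> \<Gamma>1" "y \<in> topspace X1" "d = germ \<Gamma>1 X1 h y" using d by (rule G1.arrE)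
    have xy: "x = h y" using cd gx hy G1.comp_cond by simp
    obtain g' where g': "g' \<in> \<Gamma>2" "intertwines X1 \<phi> g g'" using bspec[OF mf(3) gx(1)] by blast
    obtain h' where h': "h' \<in> \<Gamma>2" "intertwines X1 \<phi> h h'" using bspec[OF mf(3) hy(1)] by blast
    have Fc: "?F c = germ \<Gamma>2 X2 g' (\<phi> x)" using wd[OF gx(1,2) g'] gx(3) by simp
    have Fd: "?F d = germ \<Gamma>2 X2 h' (\<phi> y)" using wd[OF hy(1,2) h'] hy(3) by simp
    have pxy: "\<phi> x = h' (\<phi> y)" using h'(2) hy(2) xy unfolding intertwines_def by simp
    show "gsrc ?G2 (?F c) = grng ?G2 (?F d)"
      unfolding Fc Fd using G2.comp_cond[OF g'(1) phit[OF gx(2)] h'(1) phit[OF hy(2)]] pxy by simp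
    have ghin: "g \<circ> h \<in> \<Gamma>1" "g' \<circ> h' \<in> \<Gamma>2" using G1.comp_in G2.comp_in gx hy g' h' by blast+
    have itgh: "intertwines X1 \<phi> (g \<circ> h) (g' \<circ> h')"
      unfolding intertwines_def
    proof
      fix z assume z: "z \<in> topspace X1"
      have hz: "h z \<in> topspace X1" using G1.Gam_top[OF hy(1) z] .
      have "\<phi> (g (h z)) = g' (\<phi> (h z))" using g'(2) hz unfolding intertwines_def by simp
      also have "\<dots> = g' (h' (\<phi> z))" using h'(2) z unfolding intertwines_def by simp
      finally show "\<phi> ((g \<circ> h) z) = (g' \<circ> h') (\<phi> z)" by simp
    qed
    have "gmul ?G1 c d = germ \<Gamma>1 X1 (g \<circ> h) y" using G1.mul_gm'[OF gx(1) hy(1,2) xy] gx hy by simp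
    then have "?F (gmul ?G1 c d) = germ \<Gamma>2 X2 (g' \<circ> h') (\<phi> y)" using wd[OF ghin(1) hy(2) ghin(2) itgh] by simp
    also have "\<dots> = gmul ?G2 (germ \<Gamma>2 X2 g' (\<phi> x)) (germ \<Gamma>2 X2 h' (\<phi> y))"
      using G2.mul_gm'[OF g'(1) h'(1) phit[OF hy(2)] pxy] by simp
    finally show "?F (gmul ?G1 c d) = gmul ?G2 (?F c) (?F d)" using Fc Fd by simp
  qed
  have cont: "continuous_map (gtop ?G1) (gtop ?G2) ?F"
  proof (rule G1.cont_T)
    fix c assume "c \<in> garr ?G1" then show "?F c \<in> topspace (gtop ?G2)" using F_arr G2.topT by simp
  next
    fix g assume g: "g \<in> \<Gamma>1"
    obtain g' where g': "g' \<in> \<Gamma>2" "intertwines X1 \<phi> g g'" using bspec[OF mf(3) g] by blast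
    show "continuous_map X1 (gtop ?G2) (\<lambda>y. ?F (germ \<Gamma>1 X1 g y))"
    proof (rule continuous_map_eq[OF continuous_map_compose[OF mf(1) G2.cont_e[OF g'(1)]]])
      fix y assume "y \<in> topspace X1"
      then show "((\<lambda>y. germ \<Gamma>2 X2 g' y) \<circ> \<phi>) y = ?F (germ \<Gamma>1 X1 g y)" using wd[OF g _ g'] by simp
    qed
  qed
  have loc: "\<exists>W. openin (gtop ?G1) W \<and> c \<in> W \<and> openin (gtop ?G2) (?F ` W) \<and>
        homeomorphic_map (subtopology (gtop ?G1) W) (subtopology (gtop ?G2) (?F ` W)) ?F"
    if c: "c \<in> topspace (gtop ?G1)" for c
  proof -
    have "c \<in> garr ?G1" using c G1.topT by simp
    then obtain g x where gx: "g \<in> \<Gamma>1" "x \<in> topspace X1" "c = germ \<Gamma>1 X1 g x" by (rule G1.arrE)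
    obtain g' where g': "g' \<in> \<Gamma>2" "intertwines X1 \<phi> g g'" using bspec[OF mf(3) gx(1)] by blast
    obtain U where U: "openin X1 U" "x \<in> U" "openin X2 (\<phi> ` U)"
      "homeomorphic_map (subtopology X1 U) (subtopology X2 (\<phi> ` U)) \<phi>"
      using mor gx(2) unfolding spatg_mor_def local_homeo_def by blast
    have Ut: "U \<subseteq> topspace X1" using U openin_subset by blast
    let ?W = "G1.B g U"
    have img: "?F ` ?W = G2.B g' (\<phi> ` U)"
    proof
      show "?F ` ?W \<subseteq> G2.B g' (\<phi> ` U)"
      proof
        fix e assume "e \<in> ?F ` ?W"
        then obtain d where d: "d \<in> ?W" "e = ?F d" by blast
        then obtain y where y: "y \<in> U" "d = germ \<Gamma>1 X1 g y" unfolding G1.B_mem by blast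
        have "e = germ \<Gamma>2 X2 g' (\<phi> y)" using d y wd[OF gx(1) _ g'] Ut by auto
        then show "e \<in> G2.B g' (\<phi> ` U)" using y G2.germ_in_B by blast
      qed
      show "G2.B g' (\<phi> ` U) \<subseteq> ?F ` ?W"
      proof
        fix e assume "e \<in> G2.B g' (\<phi> ` U)"
        then obtain z where z: "z \<in> \<phi> ` U" "e = germ \<Gamma>2 X2 g' z" unfolding G2.B_mem by blast
        then obtain y where y: "y \<in> U" "z = \<phi> y" by blast
        have "e = ?F (germ \<Gamma>1 X1 g y)" using z y wd[OF gx(1) _ g'] Ut by auto
        moreover have "germ \<Gamma>1 X1 g y \<in> ?W" using y G1.germ_in_B by blast
        ultimately show "e \<in> ?F ` ?W" by blast
      qed
    qed
    have oW: "openin (gtop ?G1) ?W" using G1.B_open[OF gx(1) U(1)] .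
    have cW: "c \<in> ?W" using gx U G1.germ_in_B by blast
    have oF: "openin (gtop ?G2) (?F ` ?W)" unfolding img using G2.B_open[OF g'(1) U(3)] .
    have h1: "homeomorphic_map (subtopology (gtop ?G1) ?W) (subtopology X1 U) germ_pt"
      using G1.E_map(2)[OF gx(1) U(1)] .
    have h2: "homeomorphic_map (subtopology X2 (\<phi> ` U)) (subtopology (gtop ?G2) (G2.B g' (\<phi> ` U))) (\<lambda>y. germ \<Gamma>2 X2 g' y)"
      using G2.E_map(1)[OF g'(1) U(3)] .
    have h3: "homeomorphic_map (subtopology (gtop ?G1) ?W) (subtopology (gtop ?G2) (G2.B g' (\<phi> ` U)))
        ((\<lambda>y. germ \<Gamma>2 X2 g' y) \<circ> (\<phi> \<circ> germ_pt))"
      using homeomorphic_map_compose[OF homeomorphic_map_compose[OF h1 U(4)] h2] .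
    have h4: "homeomorphic_map (subtopology (gtop ?G1) ?W) (subtopology (gtop ?G2) (G2.B g' (\<phi> ` U))) ?F"
    proof (rule homeomorphic_map_eq[OF h3])
      fix e assume "e \<in> topspace (subtopology (gtop ?G1) ?W)"
      then have "e \<in> ?W" by simp
      then obtain y where y: "y \<in> U" "e = germ \<Gamma>1 X1 g y" unfolding G1.B_mem by blast
      have yt: "y \<in> topspace X1" using y Ut by blast
      show "((\<lambda>y. germ \<Gamma>2 X2 g' y) \<circ> (\<phi> \<circ> germ_pt)) e = ?F e"
        using y yt wd[OF gx(1) yt g'] G1.fn_pt[OF gx(1) yt] by simp
    qed
    show ?thesis using oW cW oF h4 img by (intro exI[of _ ?W]) simp
  qed
  have "local_homeo (gtop ?G1) (gtop ?G2) ?F"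
    unfolding local_homeo_def using cont loc by blast
  then show ?thesis unfolding etale_hom_def using hom by blast
qed

theorem proposition5p3:
  fixes \<Gamma>1 :: "('a \<Rightarrow> 'a) set" and X1 :: "'a topology"
    and \<Gamma>2 :: "('b \<Rightarrow> 'b) set" and X2 :: "'b topology"
    and \<Gamma>3 :: "('c \<Rightarrow> 'c) set" and X3 :: "'c topology"
    and \<phi> :: "'a \<Rightarrow> 'b" and \<psi> :: "'b \<Rightarrow> 'c"
  assumes obj1: "spatg_obj \<Gamma>1 X1" and obj2: "spatg_obj \<Gamma>2 X2" and obj3: "spatg_obj \<Gamma>3 X3"
    and mor_phi: "spatg_mor \<Gamma>1 X1 \<Gamma>2 X2 \<phi>"
    and mor_psi: "spatg_mor \<Gamma>2 X2 \<Gamma>3 X3 \<psi>"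
  shows
    \<comment> \<open>well-definedness: the value on [g,x] is [g', phi x] for every choice of representative and of g'\<close>
    "(\<forall>g\<in>\<Gamma>1. \<forall>x\<in>topspace X1. \<forall>g'\<in>\<Gamma>2. intertwines X1 \<phi> g g' \<longrightarrow>
        Germ_map \<Gamma>1 X1 \<Gamma>2 X2 \<phi> (germ \<Gamma>1 X1 g x) = germ \<Gamma>2 X2 g' (\<phi> x))
     \<comment> \<open>Germ sends objects of SpatG to objects of Gpoid\<close>
     \<and> gpoid_obj (Germ \<Gamma>1 X1)
     \<comment> \<open>Germ(phi) is an etale homomorphism\<close>
     \<and> etale_hom (Germ \<Gamma>1 X1) (Germ \<Gamma>2 X2) (Germ_map \<Gamma>1 X1 \<Gamma>2 X2 \<phi>)
     \<comment> \<open>functoriality: identities\<close>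
     \<and> (\<forall>c\<in>garr (Germ \<Gamma>1 X1). Germ_map \<Gamma>1 X1 \<Gamma>1 X1 id c = c)
     \<comment> \<open>functoriality: composition\<close>
     \<and> (\<forall>c\<in>garr (Germ \<Gamma>1 X1).
          Germ_map \<Gamma>1 X1 \<Gamma>3 X3 (\<psi> \<circ> \<phi>) c
            = Germ_map \<Gamma>2 X2 \<Gamma>3 X3 \<psi> (Germ_map \<Gamma>1 X1 \<Gamma>2 X2 \<phi> c))"
proof -
  interpret G1: germ_ctx \<Gamma>1 X1 by (rule germ_ctx.intro[OF obj1])
  interpret G2: germ_ctx \<Gamma>2 X2 by (rule germ_ctx.intro[OF obj2])
  note mf = mor_facts[OF mor_phi]
  note mg = mor_facts[OF mor_psi]
  note wd1 = WD[OF obj1 obj2 mf(1) mf(2) mf(3)]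
  note wd2 = WD[OF obj2 obj3 mg(1) mg(2) mg(3)]
  have P1: "\<forall>g\<in>\<Gamma>1. \<forall>x\<in>topspace X1. \<forall>g'\<in>\<Gamma>2. intertwines X1 \<phi> g g' \<longrightarrow>
        Germ_map \<Gamma>1 X1 \<Gamma>2 X2 \<phi> (germ \<Gamma>1 X1 g x) = germ \<Gamma>2 X2 g' (\<phi> x)"
    using wd1 by blast
  have P4: "\<forall>c\<in>garr (Germ \<Gamma>1 X1). Germ_map \<Gamma>1 X1 \<Gamma>1 X1 id c = c"
  proof
    fix c assume "c \<in> garr (Germ \<Gamma>1 X1)"
    then obtain g x where gx: "g \<in> \<Gamma>1" "x \<in> topspace X1" "c = germ \<Gamma>1 X1 g x" by (rule G1.arrE)
    have it: "intertwines X1 id g g" unfolding intertwines_def by simp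
    have "Germ_map \<Gamma>1 X1 \<Gamma>1 X1 id (germ \<Gamma>1 X1 g x) = germ \<Gamma>1 X1 g (id x)"
      by (rule WD[OF obj1 obj1 continuous_map_id _ _ gx(1,2) gx(1) it])
         (auto simp: intertwines_def)
    then show "Germ_map \<Gamma>1 X1 \<Gamma>1 X1 id c = c" using gx by simp
  qed
  have exc: "\<exists>g3\<in>\<Gamma>3. intertwines X1 (\<psi> \<circ> \<phi>) g g3" if g: "g \<in> \<Gamma>1" for g
  proof -
    obtain g' where g': "g' \<in> \<Gamma>2" "intertwines X1 \<phi> g g'" using bspec[OF mf(3) g] by blast
    obtain g3 where g3: "g3 \<in> \<Gamma>3" "intertwines X2 \<psi> g' g3" using bspec[OF mg(3) g'(1)] by blast
    have "intertwines X1 (\<psi> \<circ> \<phi>) g g3"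
      unfolding intertwines_def
    proof
      fix y assume y: "y \<in> topspace X1"
      have py: "\<phi> y \<in> topspace X2" using mf(1) y continuous_map_image_subset_topspace by blast
      have "\<psi> (\<phi> (g y)) = \<psi> (g' (\<phi> y))" using g'(2) y unfolding intertwines_def by simp
      also have "\<dots> = g3 (\<psi> (\<phi> y))" using g3(2) py unfolding intertwines_def by simp
      finally show "(\<psi> \<circ> \<phi>) (g y) = g3 ((\<psi> \<circ> \<phi>) y)" by simp
    qed
    then show ?thesis using g3 by blast
  qed
  have P5: "\<forall>c\<in>garr (Germ \<Gamma>1 X1).
          Germ_map \<Gamma>1 X1 \<Gamma>3 X3 (\<psi> \<circ> \<phi>) c
            = Germ_map \<Gamma>2 X2 \<Gamma>3 X3 \<psi> (Germ_map \<Gamma>1 X1 \<Gamma>2 X2 \<phi> c)"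
  proof
    fix c assume "c \<in> garr (Germ \<Gamma>1 X1)"
    then obtain g x where gx: "g \<in> \<Gamma>1" "x \<in> topspace X1" "c = germ \<Gamma>1 X1 g x" by (rule G1.arrE)
    obtain g' where g': "g' \<in> \<Gamma>2" "intertwines X1 \<phi> g g'" using bspec[OF mf(3) gx(1)] by blast
    obtain g3 where g3: "g3 \<in> \<Gamma>3" "intertwines X2 \<psi> g' g3" using bspec[OF mg(3) g'(1)] by blast
    have px: "\<phi> x \<in> topspace X2" using mf(1) gx(2) continuous_map_image_subset_topspace by blast
    have it3: "intertwines X1 (\<psi> \<circ> \<phi>) g g3"
      unfolding intertwines_def
    proof
      fix y assume y: "y \<in> topspace X1"
      have py: "\<phi> y \<in> topspace X2" using mf(1) y continuous_map_image_subset_topspace by blast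
      have "\<psi> (\<phi> (g y)) = \<psi> (g' (\<phi> y))" using g'(2) y unfolding intertwines_def by simp
      also have "\<dots> = g3 (\<psi> (\<phi> y))" using g3(2) py unfolding intertwines_def by simp
      finally show "(\<psi> \<circ> \<phi>) (g y) = g3 ((\<psi> \<circ> \<phi>) y)" by simp
    qed
    have cc: "continuous_map X1 X3 (\<psi> \<circ> \<phi>)" using continuous_map_compose[OF mf(1) mg(1)] .
    have oc: "openin X3 ((\<psi> \<circ> \<phi>) ` U)" if "openin X1 U" for U
    proof -
      have "openin X2 (\<phi> ` U)" using mf(2) that by blast
      then have "openin X3 (\<psi> ` (\<phi> ` U))" using mg(2) by blast
      then show ?thesis by (simp add: image_comp)
    qed
    have L: "Germ_map \<Gamma>1 X1 \<Gamma>3 X3 (\<psi> \<circ> \<phi>) c = germ \<Gamma>3 X3 g3 ((\<psi> \<circ> \<phi>) x)"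
    proof -
      have "\<forall>U. openin X1 U \<longrightarrow> openin X3 ((\<psi> \<circ> \<phi>) ` U)" using oc by blast
      moreover have "\<forall>g\<in>\<Gamma>1. \<exists>g3\<in>\<Gamma>3. intertwines X1 (\<psi> \<circ> \<phi>) g g3" using exc by blast
      ultimately show ?thesis using WD[OF obj1 obj3 cc _ _ gx(1,2) g3(1) it3] gx(3) by simp
    qed
    have R1: "Germ_map \<Gamma>1 X1 \<Gamma>2 X2 \<phi> c = germ \<Gamma>2 X2 g' (\<phi> x)" using wd1[OF gx(1,2) g'] gx(3) by simp
    have R2: "Germ_map \<Gamma>2 X2 \<Gamma>3 X3 \<psi> (germ \<Gamma>2 X2 g' (\<phi> x)) = germ \<Gamma>3 X3 g3 (\<psi> (\<phi> x))"
      using wd2[OF g'(1) px g3] .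
    show "Germ_map \<Gamma>1 X1 \<Gamma>3 X3 (\<psi> \<circ> \<phi>) c = Germ_map \<Gamma>2 X2 \<Gamma>3 X3 \<psi> (Germ_map \<Gamma>1 X1 \<Gamma>2 X2 \<phi> c)"
      using L R1 R2 by simp
  qed
  show ?thesis
    using P1 G1.gpoid_obj_G etale_map[OF obj1 obj2 mor_phi] P4 P5 by blast
qed

end
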